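(* Let $W=e^{-q}$ be the bivariate Freud weight and $\{\mathbb{P}_n\}$ an orthonormal polynomial system for it, with matrices $G^n_k$, $G_n$, $A_{n,i}$ as in the context. Then for all $n\geqslant0$ and $i,j\in\{1,2\}$, $$A_{n,i}A_{n,j}^T+A_{n-1,i}^TA_{n-1,j}=G^n_{n-2}G_{n-2}^{-1}A_{n-2,i}A_{n-1,j}-A_{n,i}A_{n+1,j}G^{n+2}_nG_n^{-1}.$$
   Context: Parameters $a_{4,0},a_{2,2},a_{0,4}\geqslant0$, $a_{2,0},a_{0,2}\in\mathbb{R}$, $a_{4,0}+a_{2,2}>0$, $a_{2,2}+a_{0,4}>0$; $q(x,y)=a_{4,0}x^4+a_{2,2}x^2y^2+a_{0,4}y^4+a_{2,0}x^2+a_{0,2}y^2$, $W=e^{-q}$, inner product $(f,g)=\iint_{\mathbb{R}^2}fgW\,dx\,dy$ (entrywise on vectors). $\mathbb{X}_n=(x^n,x^{n-1}y,\dots,y^n)^T$. An orthonormal polynomial system: column vectors $\mathbb{P}_n=(P_{n,0},\dots,P_{n,n})^T$ of linearly independent polynomials of exact total degree $n$ with $(\mathbb{P}_n,\mathbb{P}_m^T)=\delta_{nm}I_{n+1}$. Write $\mathbb{P}_n=\sum_kG^n_k\mathbb{X}_k$ with constant $(n+1)\times(k+1)$ matrices, $G_n:=G^n_n$ invertible, convention $G^n_m=0$ for $m<0$ or $m>n$. $A_{n,i}$ ($(n+1)\times(n+2)$) are defined by $x\mathbb{P}_n=A_{n,1}\mathbb{P}_{n+1}+A_{n-1,1}^T\mathbb{P}_{n-1}$,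 $y\mathbb{P}_n=A_{n,2}\mathbb{P}_{n+1}+A_{n-1,2}^T\mathbb{P}_{n-1}$, $n\geqslant0$, $\mathbb{P}_{-1}=0$; matrices $A_{m,i}$ with $m<0$ are taken to be zero. *)

theory Defs
  imports "HOL-Analysis.Lebesgue_Measure" "Jordan_Normal_Form.Matrix"
begin

definition freud_q :: "real \<Rightarrow> real \<Rightarrow> real \<Rightarrow> real \<Rightarrow> real \<Rightarrow> real \<Rightarrow> real \<Rightarrow> real" where
  "freud_q a40 a22 a04 a20 a02 x y =
     a40 * x^4 + a22 * x^2 * y^2 + a04 * y^4 + a20 * x^2 + a02 * y^2"

definition freud_W :: "real \<Rightarrow> real \<Rightarrow> real \<Rightarrow> real \<Rightarrow> real \<Rightarrow> real \<Rightarrow> real \<Rightarrow> real" where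
  "freud_W a40 a22 a04 a20 a02 x y = exp (- freud_q a40 a22 a04 a20 a02 x y)"

definition inner_W :: "(real \<Rightarrow> real \<Rightarrow> real) \<Rightarrow> (real \<Rightarrow> real \<Rightarrow> real) \<Rightarrow> (real \<Rightarrow> real \<Rightarrow> real)
    \<Rightarrow> real" where
  "inner_W W f g = integral\<^sup>L (lborel :: (real \<times> real) measure) (\<lambda>(x, y). f x y * g x y * W x y)"

definition monvec :: "nat \<Rightarrow> real \<Rightarrow> real \<Rightarrow> real vec" where
  "monvec k x y = vec (k + 1) (\<lambda>j. x ^ (k - j) * y ^ j)"

definition Pvec :: "(nat \<Rightarrow> nat \<Rightarrow> real mat) \<Rightarrow> nat \<Rightarrow> real \<Rightarrow> real \<Rightarrow> real vec" where
  "Pvec G n x y = vec (n + 1) (\<lambda>i. \<Sum>k\<le>n. (G n k *\<^sub>v monvec k x y) $ i)"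

definition orthonormal_system :: "(real \<Rightarrow> real \<Rightarrow> real) \<Rightarrow> (nat \<Rightarrow> nat \<Rightarrow> real mat) \<Rightarrow> bool" where
  "orthonormal_system W G \<longleftrightarrow>
     (\<forall>n k. k \<le> n \<longrightarrow> G n k \<in> carrier_mat (n + 1) (k + 1)) \<and>
     (\<forall>n. invertible_mat (G n n)) \<and>
     (\<forall>n m i j. i \<le> n \<longrightarrow> j \<le> m \<longrightarrow>
        integrable (lborel :: (real \<times> real) measure)
          (\<lambda>(x, y). (Pvec G n x y $ i) * (Pvec G m x y $ j) * W x y) \<and>
        inner_W W (\<lambda>x y. Pvec G n x y $ i) (\<lambda>x y. Pvec G m x y $ j)
          = (if n = m \<and> i = j then 1 else 0))"

definition coord :: "nat \<Rightarrow> real \<Rightarrow> real \<Rightarrow> real" where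
  "coord i x y = (if i = 1 then x else y)"

definition three_term :: "(nat \<Rightarrow> nat \<Rightarrow> real mat) \<Rightarrow> (nat \<Rightarrow> nat \<Rightarrow> real mat) \<Rightarrow> bool" where
  "three_term G A \<longleftrightarrow>
     (\<forall>n i. i \<in> {1, 2} \<longrightarrow> A n i \<in> carrier_mat (n + 1) (n + 2)) \<and>
     (\<forall>n i x y. i \<in> {1, 2} \<longrightarrow>
        coord i x y \<cdot>\<^sub>v Pvec G n x y =
          A n i *\<^sub>v Pvec G (n + 1) x y +
          (if n = 0 then 0\<^sub>v (n + 1) else transpose_mat (A (n - 1) i) *\<^sub>v Pvec G (n - 1) x y))"

definition minv :: "real mat \<Rightarrow> real mat" where
  "minv M = (SOME B. B \<in> carrier_mat (dim_row M) (dim_row M) \<and>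
                     M * B = 1\<^sub>m (dim_row M) \<and> B * M = 1\<^sub>m (dim_row M))"

end

theory Submission
  imports Defs
begin

definition pv :: "nat \<Rightarrow> nat \<Rightarrow> (nat \<Rightarrow> real mat) \<Rightarrow> real \<Rightarrow> real \<Rightarrow> real vec" where
  "pv m D C x y = vec m (\<lambda>r. \<Sum>k\<le>D. (C k *\<^sub>v monvec k x y) $ r)"

definition shiftm :: "nat \<Rightarrow> nat \<Rightarrow> real mat" where
  "shiftm k i = mat (k+1) (k+2) (\<lambda>(r,c). if c = (if i = 1 then r else r+1) then 1 else 0)"

lemma monvec_carrier[simp]: "monvec k x y \<in> carrier_vec (k+1)"
  by (simp add: monvec_def)

lemma monvec_carrier'[simp]: "monvec k x y \<in> carrier_vec (Suc k)"
  by (simp add: monvec_def)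

lemma mv_entry:
  assumes "M \<in> carrier_mat m (k+1)" "r < m"
  shows "(M *\<^sub>v monvec k x y) $ r = (\<Sum>c\<le>k. M $$ (r,c) * (x^(k-c) * y^c))"
  using assms by (simp add: mult_mat_vec_def monvec_def scalar_prod_def atLeast0LessThan lessThan_Suc_atMost)

lemma shift_monvec: "coord i x y \<cdot>\<^sub>v monvec k x y = shiftm k i *\<^sub>v monvec (Suc k) x y"
proof (rule eq_vecI)
  show "dim_vec (coord i x y \<cdot>\<^sub>v monvec k x y) = dim_vec (shiftm k i *\<^sub>v monvec (Suc k) x y)"
    by (simp add: shiftm_def monvec_def)
  fix r assume "r < dim_vec (shiftm k i *\<^sub>v monvec (Suc k) x y)"
  then have r: "r < k+1" by (simp add: shiftm_def)
  have "(shiftm k i *\<^sub>v monvec (Suc k) x y) $ r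
     = (\<Sum>c\<le>Suc k. (if c = (if i = 1 then r else r+1) then 1 else 0) * (x^(Suc k-c) * y^c))"
    using r by (subst mv_entry[of _ "k+1"]) (auto simp: shiftm_def)
  also have "\<dots> = (if i = 1 then x^(Suc k - r) * y^r else x^(Suc k-(r+1)) * y^(r+1))"
    using r by (simp add: if_distrib[where f="\<lambda>a. a * _"] sum.delta cong: if_cong)
  also have "\<dots> = coord i x y * (x^(k-r) * y^r)"
    using r by (auto simp: coord_def Suc_diff_le)
  finally show "(coord i x y \<cdot>\<^sub>v monvec k x y) $ r = (shiftm k i *\<^sub>v monvec (Suc k) x y) $ r"
    using r by (simp add: monvec_def)
qed

lemma pv_carrier[simp]: "pv m D C x y \<in> carrier_vec m" by (simp add: pv_def)
lemma pv_dim[simp]: "dim_vec (pv m D C x y) = m" by (simp add: pv_def)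

lemma Pvec_pv: "Pvec G n x y = pv (n+1) n (G n) x y"
  by (simp add: Pvec_def pv_def)

lemma pv_unique:
  assumes C: "\<forall>k\<le>D. C k \<in> carrier_mat m (k+1)" and C': "\<forall>k\<le>D. C' k \<in> carrier_mat m (k+1)"
    and eq: "\<forall>x y. pv m D C x y = pv m D C' x y" and kD: "k \<le> D"
  shows "C k = C' k"
proof (rule eq_matI)
  have Ck: "C k \<in> carrier_mat m (k+1)" "C' k \<in> carrier_mat m (k+1)" using C C' kD by auto
  show "dim_row (C k) = dim_row (C' k)" "dim_col (C k) = dim_col (C' k)"
    using Ck by auto
  fix r c assume "r < dim_row (C' k)" "c < dim_col (C' k)"
  then have r: "r < m" and c: "c \<le> k" using C' kD by auto
  define d where "d k c = C k $$ (r,c) - C' k $$ (r,c)" for k c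
  have h: "(\<Sum>k\<le>D. \<Sum>c\<le>k. d k c * (x^(k-c) * y^c)) = 0" for x y
  proof -
    have "pv m D C x y $ r = pv m D C' x y $ r" using eq by simp
    then have "(\<Sum>k\<le>D. \<Sum>c\<le>k. C k $$ (r,c) * (x^(k-c) * y^c))
       = (\<Sum>k\<le>D. \<Sum>c\<le>k. C' k $$ (r,c) * (x^(k-c) * y^c))"
    proof -
      have "(\<Sum>k\<le>D. (C k *\<^sub>v monvec k x y) $ r) = (\<Sum>k\<le>D. \<Sum>c\<le>k. C k $$ (r,c) * (x^(k-c) * y^c))"
        "(\<Sum>k\<le>D. (C' k *\<^sub>v monvec k x y) $ r) = (\<Sum>k\<le>D. \<Sum>c\<le>k. C' k $$ (r,c) * (x^(k-c) * y^c))"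
        using r C C' by (auto intro!: sum.cong mv_entry)
      then show ?thesis using \<open>pv m D C x y $ r = pv m D C' x y $ r\<close> r by (simp add: pv_def)
    qed
    then show ?thesis
      by (simp add: d_def left_diff_distrib sum_subtractf)
  qed
  have h2: "(\<Sum>k\<le>D. (\<Sum>c\<le>k. d k c * s^c) * t^k) = 0" for s t
  proof -
    have "(\<Sum>k\<le>D. (\<Sum>c\<le>k. d k c * s^c) * t^k) = (\<Sum>k\<le>D. \<Sum>c\<le>k. d k c * (t^(k-c) * (t * s)^c))"
    proof (rule sum.cong[OF refl])
      fix k show "(\<Sum>c\<le>k. d k c * s^c) * t^k = (\<Sum>c\<le>k. d k c * (t^(k-c) * (t * s)^c))"
        unfolding sum_distrib_right
      proof (rule sum.cong[OF refl])
        fix c assume "c \<in> {..k}"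
        then have "t^k = t^(k-c) * t^c" by (simp add: power_add[symmetric])
        then show "d k c * s ^ c * t ^ k = d k c * (t ^ (k - c) * (t * s) ^ c)"
          by (simp add: power_mult_distrib)
      qed
    qed
    also have "\<dots> = 0" by (rule h)
    finally show ?thesis .
  qed
  have "\<forall>s. (\<Sum>c\<le>k. d k c * s^c) = 0"
  proof
    fix s
    have "\<forall>t. (\<Sum>k\<le>D. (\<Sum>c\<le>k. d k c * s^c) * t^k) = 0" using h2 by blast
    then show "(\<Sum>c\<le>k. d k c * s^c) = 0" using polyfun_eq_0[of "\<lambda>k. (\<Sum>c\<le>k. d k c * s^c)" D] kD by blast
  qed
  then have "d k c = 0" using polyfun_eq_0[of "d k" k] c by blast
  then show "C k $$ (r, c) = C' k $$ (r, c)" by (simp add: d_def)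
qed

lemma pv_mult:
  assumes M: "M \<in> carrier_mat m' m" and C: "\<forall>k\<le>D. C k \<in> carrier_mat m (k+1)"
  shows "M *\<^sub>v pv m D C x y = pv m' D (\<lambda>k. M * C k) x y"
proof (rule eq_vecI)
  show "dim_vec (M *\<^sub>v pv m D C x y) = dim_vec (pv m' D (\<lambda>k. M * C k) x y)" using M by simp
  fix r assume "r < dim_vec (pv m' D (\<lambda>k. M * C k) x y)"
  then have r: "r < m'" by simp
  have "(M *\<^sub>v pv m D C x y) $ r = (\<Sum>l<m. M $$ (r,l) * (\<Sum>k\<le>D. (C k *\<^sub>v monvec k x y) $ l))"
    using M r by (simp add: mult_mat_vec_def scalar_prod_def pv_def atLeast0LessThan)
  also have "\<dots> = (\<Sum>k\<le>D. \<Sum>l<m. M $$ (r,l) * (C k *\<^sub>v monvec k x y) $ l)"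
    by (simp add: sum_distrib_left sum.swap[of _ "{..<m}"])
  also have "\<dots> = (\<Sum>k\<le>D. ((M * C k) *\<^sub>v monvec k x y) $ r)"
  proof (intro sum.cong refl)
    fix k assume "k \<in> {..D}"
    then have Ck: "C k \<in> carrier_mat m (k+1)" using C by auto
    have "((M * C k) *\<^sub>v monvec k x y) $ r = (M *\<^sub>v (C k *\<^sub>v monvec k x y)) $ r"
      using M Ck by (subst assoc_mult_mat_vec[OF M Ck monvec_carrier]) simp
    also have "\<dots> = (\<Sum>l<m. M $$ (r,l) * (C k *\<^sub>v monvec k x y) $ l)"
      using M r Ck by (simp add: index_mult_mat_vec scalar_prod_def atLeast0LessThan)
    finally show "(\<Sum>l<m. M $$ (r,l) * (C k *\<^sub>v monvec k x y) $ l) = ((M * C k) *\<^sub>v monvec k x y) $ r" by simp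
  qed
  finally show "(M *\<^sub>v pv m D C x y) $ r = pv m' D (\<lambda>k. M * C k) x y $ r"
    using r by (simp add: pv_def)
qed

lemma pv_add:
  assumes C: "\<forall>k\<le>D. C k \<in> carrier_mat m (k+1)" and C': "\<forall>k\<le>D. C' k \<in> carrier_mat m (k+1)"
  shows "pv m D C x y + pv m D C' x y = pv m D (\<lambda>k. C k + C' k) x y"
proof (rule eq_vecI)
  fix r assume "r < dim_vec (pv m D (\<lambda>k. C k + C' k) x y)"
  then have r: "r < m" by simp
  have "\<forall>k\<le>D. ((C k + C' k) *\<^sub>v monvec k x y) $ r = (C k *\<^sub>v monvec k x y) $ r + (C' k *\<^sub>v monvec k x y) $ r"
  proof (intro allI impI)
    fix k assume "k \<le> D"
    then have Ck: "C k \<in> carrier_mat m (k+1)" "C' k \<in> carrier_mat m (k+1)" using C C' by auto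
    show "((C k + C' k) *\<^sub>v monvec k x y) $ r = (C k *\<^sub>v monvec k x y) $ r + (C' k *\<^sub>v monvec k x y) $ r"
      using Ck r by (simp add: add_mult_distrib_mat_vec[OF Ck monvec_carrier])
  qed
  then show "(pv m D C x y + pv m D C' x y) $ r = pv m D (\<lambda>k. C k + C' k) x y $ r"
    using r by (simp add: pv_def sum.distrib)
qed simp

lemma pv_zero: "pv m D (\<lambda>k. 0\<^sub>m m (k+1)) x y = 0\<^sub>v m"
  by (rule eq_vecI) (auto simp: pv_def scalar_prod_def monvec_def)

lemma pv_extend:
  assumes "D \<le> D'" and C: "\<forall>k\<le>D. C k \<in> carrier_mat m (k+1)"
  shows "pv m D C x y = pv m D' (\<lambda>k. if k \<le> D then C k else 0\<^sub>m m (k+1)) x y"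
proof (rule eq_vecI)
  fix r assume "r < dim_vec (pv m D' (\<lambda>k. if k \<le> D then C k else 0\<^sub>m m (k+1)) x y)"
  then have r: "r < m" by simp
  have "(\<Sum>k\<le>D'. ((if k \<le> D then C k else 0\<^sub>m m (k+1)) *\<^sub>v monvec k x y) $ r)
      = (\<Sum>k\<le>D'. if k \<le> D then (C k *\<^sub>v monvec k x y) $ r else 0)"
    using r by (intro sum.cong refl) (auto simp: scalar_prod_def monvec_def)
  also have "\<dots> = (\<Sum>k\<in>{..D'} \<inter> {k. k \<le> D}. (C k *\<^sub>v monvec k x y) $ r)"
    by (simp add: sum.inter_restrict)
  also have "{..D'} \<inter> {k. k \<le> D} = {..D}" using assms(1) by auto
  finally show "pv m D C x y $ r = pv m D' (\<lambda>k. if k \<le> D then C k else 0\<^sub>m m (k+1)) x y $ r"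
    using r by (simp add: pv_def)
qed simp

lemma shiftm_carrier[simp]: "shiftm k i \<in> carrier_mat (Suc k) (Suc (Suc k))"
  by (simp add: shiftm_def)

lemma pv_coord:
  assumes C: "\<forall>k\<le>D. C k \<in> carrier_mat m (k+1)"
  shows "coord i x y \<cdot>\<^sub>v pv m D C x y
     = pv m (Suc D) (\<lambda>k. if k = 0 then 0\<^sub>m m 1 else C (k-1) * shiftm (k-1) i) x y"
proof (rule eq_vecI)
  fix r assume "r < dim_vec (pv m (Suc D) (\<lambda>k. if k = 0 then 0\<^sub>m m 1 else C (k-1) * shiftm (k-1) i) x y)"
  then have r: "r < m" by simp
  have "(coord i x y \<cdot>\<^sub>v pv m D C x y) $ r = (\<Sum>k\<le>D. coord i x y * (C k *\<^sub>v monvec k x y) $ r)"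
    using r by (simp add: pv_def sum_distrib_left)
  also have "\<dots> = (\<Sum>k\<le>D. ((C k * shiftm k i) *\<^sub>v monvec (Suc k) x y) $ r)"
  proof (intro sum.cong refl)
    fix k assume "k \<in> {..D}"
    then have Ck: "C k \<in> carrier_mat m (Suc k)" using C by auto
    have "((C k * shiftm k i) *\<^sub>v monvec (Suc k) x y) = C k *\<^sub>v (shiftm k i *\<^sub>v monvec (Suc k) x y)"
      using assoc_mult_mat_vec[OF Ck shiftm_carrier[of k i], of "monvec (Suc k) x y"] monvec_carrier[of "Suc k" x y] by simp
    also have "\<dots> = C k *\<^sub>v (coord i x y \<cdot>\<^sub>v monvec k x y)" by (simp add: shift_monvec)
    also have "\<dots> = coord i x y \<cdot>\<^sub>v (C k *\<^sub>v monvec k x y)" by (rule mult_mat_vec[OF Ck monvec_carrier'])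
    finally show "coord i x y * (C k *\<^sub>v monvec k x y) $ r = ((C k * shiftm k i) *\<^sub>v monvec (Suc k) x y) $ r"
      using r Ck by simp
  qed
  also have "\<dots> = pv m (Suc D) (\<lambda>k. if k = 0 then 0\<^sub>m m 1 else C (k-1) * shiftm (k-1) i) x y $ r"
    using r by (simp add: pv_def sum.atMost_Suc_shift scalar_prod_def monvec_def del: sum.atMost_Suc)
  finally show "(coord i x y \<cdot>\<^sub>v pv m D C x y) $ r = pv m (Suc D) (\<lambda>k. if k = 0 then 0\<^sub>m m 1 else C (k-1) * shiftm (k-1) i) x y $ r" .
qed simp

lemma ON_carrier:
  assumes "orthonormal_system W G" "k \<le> n"
  shows "G n k \<in> carrier_mat (n+1) (k+1)"
  using assms by (auto simp: orthonormal_system_def)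

lemma TT_carrier:
  assumes "three_term G A" "i \<in> {1,2}"
  shows "A n i \<in> carrier_mat (n+1) (n+2)"
  using assms by (auto simp: three_term_def)

lemma TT:
  assumes ON: "orthonormal_system W G" and TTm: "three_term G A" and i: "i \<in> {1,2}" and k: "k \<le> m+1"
  shows "(if k = 0 then 0\<^sub>m (m+1) 1 else G m (k-1) * shiftm (k-1) i)
       = A m i * G (m+1) k + (if 1 \<le> m \<and> k \<le> m-1 then transpose_mat (A (m-1) i) * G (m-1) k else 0\<^sub>m (m+1) (k+1))"
proof -
  define L where "L k = (if k = 0 then 0\<^sub>m (m+1) 1 else G m (k-1) * shiftm (k-1) i)" for k
  define E where "E k = (if 1 \<le> m \<and> k \<le> m-1 then transpose_mat (A (m-1) i) * G (m-1) k else 0\<^sub>m (m+1) (k+1))" for k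
  have Gm: "\<forall>k\<le>m. G m k \<in> carrier_mat (m+1) (k+1)" using ON_carrier[OF ON] by auto
  have Gm1: "\<forall>k\<le>m+1. G (m+1) k \<in> carrier_mat (m+2) (k+1)" using ON_carrier[OF ON, of _ "m+1"] by auto
  have Am: "A m i \<in> carrier_mat (m+1) (m+2)" using TT_carrier[OF TTm i] .
  have Lc: "\<forall>k\<le>Suc m. L k \<in> carrier_mat (m+1) (k+1)"
  proof (intro allI impI)
    fix k assume "k \<le> Suc m"
    then show "L k \<in> carrier_mat (m+1) (k+1)"
      using Gm[rule_format, of "k-1"] by (cases k) (auto simp: L_def)
  qed
  have Ec: "\<forall>k\<le>Suc m. E k \<in> carrier_mat (m+1) (k+1)"
  proof (intro allI impI)
    fix k assume "k \<le> Suc m"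
    show "E k \<in> carrier_mat (m+1) (k+1)"
    proof (cases "1 \<le> m \<and> k \<le> m-1")
      case True
      then have "G (m-1) k \<in> carrier_mat m (k+1)" using ON_carrier[OF ON, of k "m-1"] by simp
      moreover have "A (m-1) i \<in> carrier_mat m (m+1)" using TT_carrier[OF TTm i, of "m-1"] True by simp
      ultimately show ?thesis using True by (simp add: E_def)
    next
      case False
      then show ?thesis by (simp only: E_def if_False) simp
    qed
  qed
  have AGc: "\<forall>k\<le>Suc m. A m i * G (m+1) k \<in> carrier_mat (m+1) (k+1)"
    using Gm1 Am by auto
  have eq: "pv (m+1) (Suc m) L x y = pv (m+1) (Suc m) (\<lambda>k. A m i * G (m+1) k + E k) x y" for x y
  proof -
    have "pv (m+1) (Suc m) L x y = coord i x y \<cdot>\<^sub>v Pvec G m x y"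
      unfolding Pvec_pv pv_coord[OF Gm] L_def ..
    also have "\<dots> = A m i *\<^sub>v Pvec G (m + 1) x y +
          (if m = 0 then 0\<^sub>v (m + 1) else transpose_mat (A (m - 1) i) *\<^sub>v Pvec G (m - 1) x y)"
      using TTm i unfolding three_term_def by blast
    also have "A m i *\<^sub>v Pvec G (m + 1) x y = pv (m+1) (Suc m) (\<lambda>k. A m i * G (m+1) k) x y"
      unfolding Pvec_pv using pv_mult[OF Am, of "Suc m" "G (m+1)"] Gm1 by simp
    also have "(if m = 0 then 0\<^sub>v (m + 1) else transpose_mat (A (m - 1) i) *\<^sub>v Pvec G (m - 1) x y)
        = pv (m+1) (Suc m) E x y"
    proof (cases "m = 0")
      case True
      have "E = (\<lambda>k. 0\<^sub>m (m+1) (k+1))" by (rule ext) (simp add: E_def True)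
      then show ?thesis using pv_zero[of "m+1" "Suc m" x y] True by simp
    next
      case False
      have At: "transpose_mat (A (m-1) i) \<in> carrier_mat (m+1) m"
        using TT_carrier[OF TTm i, of "m-1"] False by simp
      have Gm2: "\<forall>k\<le>m-1. G (m-1) k \<in> carrier_mat m (k+1)"
        using ON_carrier[OF ON, of _ "m-1"] False by auto
      have "Pvec G (m - 1) x y = pv m (m-1) (G (m-1)) x y" using Pvec_pv[of G "m-1"] False by simp
      then have "transpose_mat (A (m - 1) i) *\<^sub>v Pvec G (m - 1) x y
          = pv (m+1) (m-1) (\<lambda>k. transpose_mat (A (m - 1) i) * G (m-1) k) x y"
        using pv_mult[OF At Gm2] by simp
      also have "E = (\<lambda>k. if k \<le> m-1 then transpose_mat (A (m - 1) i) * G (m-1) k else 0\<^sub>m (m+1) (k+1))"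
        using False by (intro ext) (simp add: E_def)
      then have "pv (m+1) (m-1) (\<lambda>k. transpose_mat (A (m - 1) i) * G (m-1) k) x y = pv (m+1) (Suc m) E x y"
        using pv_extend[where D="m-1" and D'="Suc m" and m="m+1" and C="\<lambda>k. transpose_mat (A (m - 1) i) * G (m-1) k"] Gm2 At False
        by simp
      finally show ?thesis using False by simp
    qed
    also have "pv (m+1) (Suc m) (\<lambda>k. A m i * G (m+1) k) x y + pv (m+1) (Suc m) E x y
        = pv (m+1) (Suc m) (\<lambda>k. A m i * G (m+1) k + E k) x y"
      by (rule pv_add[OF AGc Ec])
    finally show ?thesis .
  qed
  have "L k = A m i * G (m+1) k + E k"
    using pv_unique[OF Lc _ _, of "\<lambda>k. A m i * G (m+1) k + E k" k] eq AGc Ec k by auto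
  then show ?thesis by (simp add: L_def E_def)
qed

lemma eq_minus_of_add:
  fixes X Q P :: "real mat"
  assumes "X \<in> carrier_mat r c" "Q \<in> carrier_mat r c" "X + Q = P"
  shows "X = P - Q"
proof (rule eq_matI)
  fix a b assume ab: "a < dim_row (P - Q)" "b < dim_col (P - Q)"
  have "P $$ (a,b) = X $$ (a,b) + Q $$ (a,b)" using assms ab by auto
  then show "X $$ (a,b) = (P - Q) $$ (a,b)" using assms ab by auto
qed (use assms in auto)

lemma alg:
  fixes a0 a0j b g2 gn aim ajm g1 gm sj h si gmm a2 iv ivn :: "real mat"
  assumes c: "a0 \<in> carrier_mat N2 N3" "a0j \<in> carrier_mat N2 N3" "b \<in> carrier_mat N3 N4"
    "g2 \<in> carrier_mat N4 N2" "gn \<in> carrier_mat N2 N2" "aim \<in> carrier_mat N1 N2" "ajm \<in> carrier_mat N1 N2"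
    "g1 \<in> carrier_mat N3 N1" "gm \<in> carrier_mat N1 N1" "sj \<in> carrier_mat N1 N2" "h \<in> carrier_mat N2 N0"
    "si \<in> carrier_mat N0 N1" "gmm \<in> carrier_mat N0 N0" "a2 \<in> carrier_mat N0 N1"
    "iv \<in> carrier_mat N0 N0" "ivn \<in> carrier_mat N2 N2"
    and i1: "iv * gmm = 1\<^sub>m N0" and i2: "gn * ivn = 1\<^sub>m N2"
    and T1: "g1 * sj = b * g2 + transpose_mat a0j * gn"
    and T2: "gm * sj = ajm * gn"
    and T3: "h * si = a0 * g1 + transpose_mat aim * gm"
    and T4: "gmm * si = a2 * gm"
  shows "a0 * transpose_mat a0j + transpose_mat aim * ajm = h * iv * a2 * ajm - a0 * b * g2 * ivn"
proof -
  note [simp] = c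
  have ct: "transpose_mat a0j \<in> carrier_mat N3 N2" "transpose_mat aim \<in> carrier_mat N2 N1" by auto
  define M where "M = a0 * transpose_mat a0j + transpose_mat aim * ajm"
  have Mc: "M \<in> carrier_mat N2 N2" unfolding M_def
    using mult_carrier_mat[OF c(1) ct(1)] mult_carrier_mat[OF ct(2) c(7)] by simp
  have bg2: "b * g2 \<in> carrier_mat N3 N2" by (rule mult_carrier_mat[OF c(3) c(4)])
  have a0g: "transpose_mat a0j * gn \<in> carrier_mat N3 N2" by (rule mult_carrier_mat[OF ct(1) c(5)])
  have X: "a0 * (transpose_mat a0j * gn) \<in> carrier_mat N2 N2" by (rule mult_carrier_mat[OF c(1) a0g])
  have Y: "transpose_mat aim * (ajm * gn) \<in> carrier_mat N2 N2" by (rule mult_carrier_mat[OF ct(2) mult_carrier_mat[OF c(7) c(5)]])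
  have Z: "a0 * (b * g2) \<in> carrier_mat N2 N2" by (rule mult_carrier_mat[OF c(1) bg2])
  have "M * gn + a0 * (b * g2) = a0 * (transpose_mat a0j * gn) + transpose_mat aim * (ajm * gn) + a0 * (b * g2)"
    unfolding M_def add_mult_distrib_mat[OF mult_carrier_mat[OF c(1) ct(1)] mult_carrier_mat[OF ct(2) c(7)] c(5)]
      assoc_mult_mat[OF c(1) ct(1) c(5)] assoc_mult_mat[OF ct(2) c(7) c(5)] ..
  also have "\<dots> = (a0 * (b * g2) + a0 * (transpose_mat a0j * gn)) + transpose_mat aim * (ajm * gn)"
    unfolding comm_add_mat[OF add_carrier_mat[OF Y] Z] assoc_add_mat[OF Z X Y] ..
  also have "\<dots> = a0 * (b * g2 + transpose_mat a0j * gn) + transpose_mat aim * (gm * sj)"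
    unfolding mult_add_distrib_mat[OF c(1) bg2 a0g] T2 ..
  also have "\<dots> = a0 * (g1 * sj) + transpose_mat aim * (gm * sj)" by (simp only: T1)
  also have "\<dots> = (a0 * g1 + transpose_mat aim * gm) * sj"
    unfolding add_mult_distrib_mat[OF mult_carrier_mat[OF c(1) c(8)] mult_carrier_mat[OF ct(2) c(9)] c(10)]
      assoc_mult_mat[OF c(1) c(8) c(10)] assoc_mult_mat[OF ct(2) c(9) c(10)] ..
  also have "\<dots> = h * si * sj" by (simp only: T3)
  also have "h * si = h * (iv * gmm * si)" using left_mult_one_mat[OF c(12)] by (simp add: i1)
  also have "h * (iv * gmm * si) = h * iv * (a2 * gm)"
    unfolding assoc_mult_mat[OF c(15) c(13) c(12)] T4 assoc_mult_mat[OF c(11) c(15) mult_carrier_mat[OF c(14) c(9)]] ..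
  also have "h * iv * (a2 * gm) * sj = h * iv * a2 * ajm * gn"
  proof -
    have hi: "h * iv \<in> carrier_mat N2 N0" by (rule mult_carrier_mat[OF c(11) c(15)])
    have "h * iv * (a2 * gm) * sj = h * iv * (a2 * (gm * sj))"
      unfolding assoc_mult_mat[OF hi mult_carrier_mat[OF c(14) c(9)] c(10)] assoc_mult_mat[OF c(14) c(9) c(10)] ..
    also have "\<dots> = h * iv * a2 * (ajm * gn)"
      unfolding T2 assoc_mult_mat[OF hi c(14) mult_carrier_mat[OF c(7) c(5)]] ..
    also have "\<dots> = h * iv * a2 * ajm * gn"
      using assoc_mult_mat[OF mult_carrier_mat[OF hi c(14)] c(7) c(5)] by simp
    finally show ?thesis .
  qed
  finally have e: "M * gn + a0 * (b * g2) = h * iv * a2 * ajm * gn" .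
  have P: "h * iv * a2 * ajm \<in> carrier_mat N2 N2" by (rule mult_carrier_mat[OF mult_carrier_mat[OF mult_carrier_mat[OF c(11) c(15)] c(14)] c(7)])
  have "M * gn = h * iv * a2 * ajm * gn - a0 * (b * g2)"
    by (rule eq_minus_of_add[OF mult_carrier_mat[OF Mc c(5)] Z e])
  then have "M * gn * ivn = (h * iv * a2 * ajm * gn - a0 * (b * g2)) * ivn" by simp
  also have "\<dots> = h * iv * a2 * ajm * gn * ivn - a0 * (b * g2) * ivn"
    by (rule minus_mult_distrib_mat[OF mult_carrier_mat[OF P c(5)] Z c(16)])
  also have "h * iv * a2 * ajm * gn * ivn = h * iv * a2 * ajm"
    using assoc_mult_mat[OF P c(5) c(16)] right_mult_one_mat[OF P] by (simp add: i2)
  also have "a0 * (b * g2) * ivn = a0 * b * g2 * ivn"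
    using assoc_mult_mat[OF c(1) c(3) c(4)] by simp
  also have "M * gn * ivn = M"
    using assoc_mult_mat[OF Mc c(5) c(16)] right_mult_one_mat[OF Mc] by (simp add: i2)
  finally show ?thesis unfolding M_def .
qed

lemma alg_final:
  fixes M R a0 b g2 gn ivn :: "real mat"
  assumes Mc: "M \<in> carrier_mat N2 N2" and Rc: "R \<in> carrier_mat N2 N2"
    and c: "a0 \<in> carrier_mat N2 N3" "b \<in> carrier_mat N3 N4" "g2 \<in> carrier_mat N4 N2"
      "gn \<in> carrier_mat N2 N2" "ivn \<in> carrier_mat N2 N2"
    and i2: "gn * ivn = 1\<^sub>m N2"
    and e: "M * gn + a0 * (b * g2) = R * gn"
  shows "M = R - a0 * b * g2 * ivn"
proof -
  have Z: "a0 * (b * g2) \<in> carrier_mat N2 N2" by (rule mult_carrier_mat[OF c(1) mult_carrier_mat[OF c(2) c(3)]])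
  have "M * gn = R * gn - a0 * (b * g2)"
    by (rule eq_minus_of_add[OF mult_carrier_mat[OF Mc c(4)] Z e])
  then have "M * gn * ivn = (R * gn - a0 * (b * g2)) * ivn" by simp
  also have "\<dots> = R * gn * ivn - a0 * (b * g2) * ivn"
    by (rule minus_mult_distrib_mat[OF mult_carrier_mat[OF Rc c(4)] Z c(5)])
  also have "R * gn * ivn = R"
    using assoc_mult_mat[OF Rc c(4) c(5)] right_mult_one_mat[OF Rc] by (simp add: i2)
  also have "a0 * (b * g2) * ivn = a0 * b * g2 * ivn"
    using assoc_mult_mat[OF c(1) c(2) c(3)] by simp
  also have "M * gn * ivn = M"
    using assoc_mult_mat[OF Mc c(4) c(5)] right_mult_one_mat[OF Mc] by (simp add: i2)
  finally show ?thesis .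
qed

lemma alg_core:
  fixes a0 a0j b g2 gn aim ajm g1 gm sj :: "real mat"
  assumes c: "a0 \<in> carrier_mat N2 N3" "a0j \<in> carrier_mat N2 N3" "b \<in> carrier_mat N3 N4"
    "g2 \<in> carrier_mat N4 N2" "gn \<in> carrier_mat N2 N2" "aim \<in> carrier_mat N1 N2" "ajm \<in> carrier_mat N1 N2"
    "g1 \<in> carrier_mat N3 N1" "gm \<in> carrier_mat N1 N1" "sj \<in> carrier_mat N1 N2"
    and T1: "g1 * sj = b * g2 + transpose_mat a0j * gn"
    and T2: "gm * sj = ajm * gn"
  shows "(a0 * transpose_mat a0j + transpose_mat aim * ajm) * gn + a0 * (b * g2)
     = (a0 * g1 + transpose_mat aim * gm) * sj"
proof -
  have ct: "transpose_mat a0j \<in> carrier_mat N3 N2" "transpose_mat aim \<in> carrier_mat N2 N1" using c by auto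
  have bg2: "b * g2 \<in> carrier_mat N3 N2" by (rule mult_carrier_mat[OF c(3) c(4)])
  have a0g: "transpose_mat a0j * gn \<in> carrier_mat N3 N2" by (rule mult_carrier_mat[OF ct(1) c(5)])
  have X: "a0 * (transpose_mat a0j * gn) \<in> carrier_mat N2 N2" by (rule mult_carrier_mat[OF c(1) a0g])
  have Y: "transpose_mat aim * (ajm * gn) \<in> carrier_mat N2 N2" by (rule mult_carrier_mat[OF ct(2) mult_carrier_mat[OF c(7) c(5)]])
  have Z: "a0 * (b * g2) \<in> carrier_mat N2 N2" by (rule mult_carrier_mat[OF c(1) bg2])
  have "(a0 * transpose_mat a0j + transpose_mat aim * ajm) * gn + a0 * (b * g2) = a0 * (transpose_mat a0j * gn) + transpose_mat aim * (ajm * gn) + a0 * (b * g2)"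
    unfolding add_mult_distrib_mat[OF mult_carrier_mat[OF c(1) ct(1)] mult_carrier_mat[OF ct(2) c(7)] c(5)]
      assoc_mult_mat[OF c(1) ct(1) c(5)] assoc_mult_mat[OF ct(2) c(7) c(5)] ..
  also have "\<dots> = (a0 * (b * g2) + a0 * (transpose_mat a0j * gn)) + transpose_mat aim * (ajm * gn)"
    unfolding comm_add_mat[OF add_carrier_mat[OF Y] Z] assoc_add_mat[OF Z X Y] ..
  also have "\<dots> = a0 * (b * g2 + transpose_mat a0j * gn) + transpose_mat aim * (gm * sj)"
    unfolding mult_add_distrib_mat[OF c(1) bg2 a0g] T2 ..
  also have "\<dots> = a0 * (g1 * sj) + transpose_mat aim * (gm * sj)" by (simp only: T1)
  also have "\<dots> = (a0 * g1 + transpose_mat aim * gm) * sj"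
    unfolding add_mult_distrib_mat[OF mult_carrier_mat[OF c(1) c(8)] mult_carrier_mat[OF ct(2) c(9)] c(10)]
      assoc_mult_mat[OF c(1) c(8) c(10)] assoc_mult_mat[OF ct(2) c(9) c(10)] ..
  finally show ?thesis .
qed

lemma alg1:
  fixes a0 a0j b g2 gn aim ajm g1 gm sj ivn :: "real mat"
  assumes c: "a0 \<in> carrier_mat N2 N3" "a0j \<in> carrier_mat N2 N3" "b \<in> carrier_mat N3 N4"
    "g2 \<in> carrier_mat N4 N2" "gn \<in> carrier_mat N2 N2" "aim \<in> carrier_mat N1 N2" "ajm \<in> carrier_mat N1 N2"
    "g1 \<in> carrier_mat N3 N1" "gm \<in> carrier_mat N1 N1" "sj \<in> carrier_mat N1 N2" "ivn \<in> carrier_mat N2 N2"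
    and i2: "gn * ivn = 1\<^sub>m N2"
    and T1: "g1 * sj = b * g2 + transpose_mat a0j * gn"
    and T2: "gm * sj = ajm * gn"
    and T3: "0\<^sub>m N2 N1 = a0 * g1 + transpose_mat aim * gm"
  shows "a0 * transpose_mat a0j + transpose_mat aim * ajm = 0\<^sub>m N2 N2 - a0 * b * g2 * ivn"
proof (rule alg_final[OF _ _ c(1,3,4,5,11) i2])
  have ct: "transpose_mat a0j \<in> carrier_mat N3 N2" "transpose_mat aim \<in> carrier_mat N2 N1" using c by auto
  show "a0 * transpose_mat a0j + transpose_mat aim * ajm \<in> carrier_mat N2 N2"
    using mult_carrier_mat[OF c(1) ct(1)] mult_carrier_mat[OF ct(2) c(7)] by simp
  show "(a0 * transpose_mat a0j + transpose_mat aim * ajm) * gn + a0 * (b * g2) = 0\<^sub>m N2 N2 * gn"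
    unfolding alg_core[OF c(1-10) T1 T2] T3[symmetric] using c by simp
qed simp

lemma alg0:
  fixes a0 a0j b g2 gn ivn :: "real mat"
  assumes c: "a0 \<in> carrier_mat N2 N3" "a0j \<in> carrier_mat N2 N3" "b \<in> carrier_mat N3 N4"
    "g2 \<in> carrier_mat N4 N2" "gn \<in> carrier_mat N2 N2" "ivn \<in> carrier_mat N2 N2"
    and i2: "gn * ivn = 1\<^sub>m N2"
    and T1: "0\<^sub>m N3 N2 = b * g2 + transpose_mat a0j * gn"
  shows "a0 * transpose_mat a0j + 0\<^sub>m N2 N2 = 0\<^sub>m N2 N2 - a0 * b * g2 * ivn"
proof -
  have ct: "transpose_mat a0j \<in> carrier_mat N3 N2" using c by auto
  have "a0 * transpose_mat a0j = 0\<^sub>m N2 N2 - a0 * b * g2 * ivn"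
  proof (rule alg_final[OF _ _ c(1,3,4,5,6) i2])
    show "a0 * transpose_mat a0j \<in> carrier_mat N2 N2"
      using mult_carrier_mat[OF c(1) ct(1)] by simp
    have "a0 * transpose_mat a0j * gn + a0 * (b * g2) = a0 * (b * g2 + transpose_mat a0j * gn)"
      unfolding assoc_mult_mat[OF c(1) ct(1) c(5)]
        mult_add_distrib_mat[OF c(1) mult_carrier_mat[OF c(3) c(4)] mult_carrier_mat[OF ct(1) c(5)]]
      using comm_add_mat[OF mult_carrier_mat[OF c(1) mult_carrier_mat[OF c(3) c(4)]]
          mult_carrier_mat[OF c(1) mult_carrier_mat[OF ct(1) c(5)]]] by simp
    also have "\<dots> = 0\<^sub>m N2 N2" unfolding T1[symmetric] using c by simp
    finally show "a0 * transpose_mat a0j * gn + a0 * (b * g2) = 0\<^sub>m N2 N2 * gn" using c by simp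
  qed simp
  then show ?thesis using mult_carrier_mat[OF c(1) ct(1)] by simp
qed

lemma minv_props:
  assumes "invertible_mat M" "M \<in> carrier_mat n n"
  shows "minv M \<in> carrier_mat n n \<and> M * minv M = 1\<^sub>m n \<and> minv M * M = 1\<^sub>m n"
proof -
  obtain B where B: "M * B = 1\<^sub>m (dim_row M)" "B * M = 1\<^sub>m (dim_row B)"
    using assms(1) unfolding invertible_mat_def inverts_mat_def by blast
  have "dim_col B = n" using arg_cong[OF B(1), of dim_col] assms(2) by simp
  moreover have "dim_row B = n" using arg_cong[OF B(2), of dim_col] assms(2) by simp
  ultimately have "B \<in> carrier_mat (dim_row M) (dim_row M) \<and> M * B = 1\<^sub>m (dim_row M) \<and> B * M = 1\<^sub>m (dim_row M)"
    using B assms(2) by auto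
  then have "minv M \<in> carrier_mat (dim_row M) (dim_row M) \<and> M * minv M = 1\<^sub>m (dim_row M) \<and> minv M * M = 1\<^sub>m (dim_row M)"
    unfolding minv_def by (rule someI)
  then show ?thesis using assms(2) by simp
qed

theorem proposition4p4:
  fixes a40 a22 a04 a20 a02 :: real
    and G :: "nat \<Rightarrow> nat \<Rightarrow> real mat"
    and A :: "nat \<Rightarrow> nat \<Rightarrow> real mat"
  assumes "a40 \<ge> 0" and "a22 \<ge> 0" and "a04 \<ge> 0"
    and "a40 + a22 > 0" and "a22 + a04 > 0"
    and "orthonormal_system (freud_W a40 a22 a04 a20 a02) G"
    and "three_term G A"
    and "i \<in> {1, 2}" and "j \<in> {1, 2}"
  shows "A n i * transpose_mat (A n j) +
           (if n \<ge> 1 then transpose_mat (A (n - 1) i) * A (n - 1) j else 0\<^sub>m (n + 1) (n + 1))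
         = (if n \<ge> 2 then G n (n - 2) * minv (G (n - 2) (n - 2)) * A (n - 2) i * A (n - 1) j
            else 0\<^sub>m (n + 1) (n + 1))
           - A n i * A (n + 1) j * G (n + 2) n * minv (G n n)"
proof -
  note ON = assms(6) and TTm = assms(7) and i = assms(8) and j = assms(9)
  have Gc: "\<And>n k. k \<le> n \<Longrightarrow> G n k \<in> carrier_mat (n+1) (k+1)" using ON_carrier[OF ON] .
  have Ai: "\<And>n. A n i \<in> carrier_mat (n+1) (n+2)" using TT_carrier[OF TTm i] .
  have Aj: "\<And>n. A n j \<in> carrier_mat (n+1) (n+2)" using TT_carrier[OF TTm j] .
  have Iv: "\<And>n. minv (G n n) \<in> carrier_mat (n+1) (n+1) \<and> G n n * minv (G n n) = 1\<^sub>m (n+1) \<and> minv (G n n) * G n n = 1\<^sub>m (n+1)"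
  proof -
    fix n
    have "invertible_mat (G n n)" using ON unfolding orthonormal_system_def by blast
    then show "minv (G n n) \<in> carrier_mat (n+1) (n+1) \<and> G n n * minv (G n n) = 1\<^sub>m (n+1) \<and> minv (G n n) * G n n = 1\<^sub>m (n+1)"
      using minv_props Gc[of n n] by blast
  qed
  note TTi = TT[OF ON TTm i] and TTj = TT[OF ON TTm j]
  have Sc: "\<And>k i. shiftm k i \<in> carrier_mat (k+1) (k+2)" by simp
  consider "n = 0" | "n = 1" | p where "n = Suc (Suc p)"
  proof (cases n)
    case (Suc q) then show ?thesis by (cases q) (auto intro: that)
  qed (auto intro: that)
  then show ?thesis
  proof cases
    case 1
    have T1: "0\<^sub>m 2 1 = A 1 j * G 2 0 + transpose_mat (A 0 j) * G 0 0"
      using TTj[where m=1 and k=0] by (simp add: numeral_2_eq_2)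
    have "A 0 i * transpose_mat (A 0 j) + 0\<^sub>m 1 1 = 0\<^sub>m 1 1 - A 0 i * A 1 j * G 2 0 * minv (G 0 0)"
      by (rule alg0[where ?N2.0=1 and ?N3.0=2 and ?N4.0=3, OF _ _ _ _ _ _ _ T1])
        (use Ai[of 0] Aj[of 0] Aj[of 1] Gc[of 0 2] Gc[of 0 0] Iv[of 0] in \<open>simp_all add: numeral_2_eq_2 numeral_3_eq_3\<close>)
    then show ?thesis using 1 by (simp add: numeral_2_eq_2)
  next
    case 2
    have T1: "G 2 0 * shiftm 0 j = A 2 j * G 3 1 + transpose_mat (A 1 j) * G 1 1"
      using TTj[where m=2 and k=1] by (simp add: numeral_2_eq_2 numeral_3_eq_3)
    have T2: "G 0 0 * shiftm 0 j = A 0 j * G 1 1"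
      using TTj[where m=0 and k=1] Aj[of 0] Gc[of 1 1] by (simp add: numeral_2_eq_2)
    have T3: "0\<^sub>m 2 1 = A 1 i * G 2 0 + transpose_mat (A 0 i) * G 0 0"
      using TTi[where m=1 and k=0] by (simp add: numeral_2_eq_2)
    have "A 1 i * transpose_mat (A 1 j) + transpose_mat (A 0 i) * A 0 j = 0\<^sub>m 2 2 - A 1 i * A 2 j * G 3 1 * minv (G 1 1)"
      by (rule alg1[where ?N1.0=1 and ?N2.0=2 and ?N3.0=3 and ?N4.0=4, OF _ _ _ _ _ _ _ _ _ _ _ _ T1 T2 T3])
        (use Ai[of 1] Aj[of 1] Aj[of 2] Gc[of 1 3] Gc[of 1 1] Iv[of 1] Ai[of 0] Aj[of 0] Gc[of 0 2] Gc[of 0 0] Sc[of 0 j]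
          in \<open>simp_all add: numeral_2_eq_2 numeral_3_eq_3 eval_nat_numeral\<close>)
    then show ?thesis using 2 by (simp add: numeral_2_eq_2 numeral_3_eq_3)
  next
    case 3
    have T1: "G (Suc (Suc (Suc p))) (Suc p) * shiftm (Suc p) j
        = A (Suc (Suc (Suc p))) j * G (Suc (Suc (Suc (Suc p)))) (Suc (Suc p)) + transpose_mat (A (Suc (Suc p)) j) * G (Suc (Suc p)) (Suc (Suc p))"
      using TTj[where m="Suc (Suc (Suc p))" and k="Suc (Suc p)"] by simp
    have T2: "G (Suc p) (Suc p) * shiftm (Suc p) j = A (Suc p) j * G (Suc (Suc p)) (Suc (Suc p))"
      using TTj[where m="Suc p" and k="Suc (Suc p)"] Aj[of "Suc p"] Gc[of "Suc (Suc p)" "Suc (Suc p)"] by simp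
    have T3: "G (Suc (Suc p)) p * shiftm p i = A (Suc (Suc p)) i * G (Suc (Suc (Suc p))) (Suc p) + transpose_mat (A (Suc p) i) * G (Suc p) (Suc p)"
      using TTi[where m="Suc (Suc p)" and k="Suc p"] by simp
    have T4: "G p p * shiftm p i = A p i * G (Suc p) (Suc p)"
    proof -
      have nc: "\<not> (1 \<le> p \<and> Suc p \<le> p - 1)" by arith
      show ?thesis using TTi[where m="p" and k="Suc p", unfolded if_not_P[OF nc]] Ai[of "p"] Gc[of "Suc p" "Suc p"] by simp
    qed
    have "A (Suc (Suc p)) i * transpose_mat (A (Suc (Suc p)) j) + transpose_mat (A (Suc p) i) * A (Suc p) j
       = G (Suc (Suc p)) p * minv (G p p) * A p i * A (Suc p) j
         - A (Suc (Suc p)) i * A (Suc (Suc (Suc p))) j * G (Suc (Suc (Suc (Suc p)))) (Suc (Suc p)) * minv (G (Suc (Suc p)) (Suc (Suc p)))"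
      by (rule alg[where ?N0.0="Suc p" and ?N1.0="Suc (Suc p)" and ?N2.0="Suc (Suc (Suc p))" and ?N3.0="Suc (Suc (Suc (Suc p)))"
            and ?N4.0="Suc (Suc (Suc (Suc (Suc p))))", OF _ _ _ _ _ _ _ _ _ _ _ _ _ _ _ _ _ _ T1 T2 T3 T4])
        (use Ai[of "Suc (Suc p)"] Aj[of "Suc (Suc p)"] Aj[of "Suc (Suc (Suc p))"] Gc[of "Suc (Suc p)" "Suc (Suc (Suc (Suc p)))"]
          Gc[of "Suc (Suc p)" "Suc (Suc p)"] Iv[of "Suc (Suc p)"] Ai[of "Suc p"] Aj[of "Suc p"]
          Gc[of "Suc p" "Suc (Suc (Suc p))"] Gc[of "Suc p" "Suc p"] Sc[of "Suc p" j] Gc[of p "Suc (Suc p)"]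
          Sc[of p i] Gc[of p p] Ai[of p] Iv[of p] in simp_all)
    then show ?thesis using 3 by simp
  qed
qed

end
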